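(* Let $\mathcal{C}$ be a finite set of latent classes with cardinality $N_{\mathcal{C}}$, let $\rho$ be a probability distribution on $\mathcal{C}$ with $\rho(c)>0$ for all $c$, and for each $c\in\mathcal{C}$ let $\mathcal{D}_c$ be a distribution on a feature space $\mathcal{X}$. Let $N$ be a number of negative samples satisfying $N=\Omega(N_{\mathcal{C}}\log N_{\mathcal{C}})$. Then for any encoder $f:\mathcal{X}\to\mathbb{R}^d$, $$L_{\mathrm{sup}}(f,\mathcal{C})\le L^\mu_{\mathrm{sup}}(f,\mathcal{C})\le \frac{1}{p^\rho_{cc}(N)}L^N_{\mathrm{un}}(f),$$ where $p^\rho_{cc}(N)$ is the probability that $N$ independent draws from $\rho$ include every element of $\mathcal{C}$ at least once (i.e. all coupons are collected after $N$ draws in an $N_{\mathcal{C}}$-coupon collector problem with draws from $\rho$).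
   Context: Positive pairs are drawn from $\mathcal{D}_{\mathrm{sim}}(x,x^+)=\sum_{c\in\mathcal{C}}\rho(c)\mathcal{D}_c(x)\mathcal{D}_c(x^+)$ and negatives from $\mathcal{D}_{\mathrm{neg}}(x^-)=\sum_{c\in\mathcal{C}}\rho(c)\mathcal{D}_c(x^-)$. The unsupervised loss with $N$ negatives is $$L^N_{\mathrm{un}}(f)=\mathbb{E}_{(x,x^+)\sim\mathcal{D}_{\mathrm{sim}},\,X^-\sim\mathcal{D}_{\mathrm{neg}}^{\otimes N}}\Big[-\log\frac{\exp(f(x)^Tf(x^+))}{\exp(f(x)^Tf(x^+))+\sum_{x^-\in X^-}\exp(f(x)^Tf(x^-))}\Big],$$ where $X^-$ is a tuple of $N$ i.i.d. draws from $\mathcal{D}_{\mathrm{neg}}$. With $\mathcal{D}_{\mathcal{C}}(x,c)=\rho(c)\mathcal{D}_c(x)$, the supervised loss is $$L_{\mathrm{sup}}(f,\mathcal{C})=\inf_{W\in\mathbb{R}^{N_{\mathcal{C}}\times d}}\mathbb{E}_{(x,c)\sim\mathcal{D}_{\mathcal{C}}}\Big[-\log\frac{\exp((Wf(x))_c)}{\sum_{c'\in\mathcal{C}}\exp((Wf(x))_{c'})}\Big],$$ and $L^\mu_{\mathrm{sup}}(f,\mathcal{C})$ is the same expectation evaluated at the mean classifier $W^\mu$ whose row indexed by $c$ is $\mathbb{E}_{x\sim\mathcal{D}_c}[f(x)]$. *)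

theory Defs
  imports "HOL-Probability.Probability"
begin

text \<open>Classes form a finite type 'c (N_C = CARD('c)),
  rho is a probability distribution on the classes, D c is the class-conditional
  distribution on the feature space (a measure on 'x), f is the encoder into real^'d.\<close>

definition D_neg :: "'c pmf \<Rightarrow> ('c \<Rightarrow> 'x measure) \<Rightarrow> 'x measure" where
  "D_neg \<rho> D = measure_pmf \<rho> \<bind> (\<lambda>c. D c)"

definition D_sim :: "'c pmf \<Rightarrow> ('c \<Rightarrow> 'x measure) \<Rightarrow> ('x \<times> 'x) measure" where
  "D_sim \<rho> D = measure_pmf \<rho> \<bind> (\<lambda>c. D c \<Otimes>\<^sub>M D c)"

definition L_un :: "'c pmf \<Rightarrow> ('c \<Rightarrow> 'x measure) \<Rightarrow> nat \<Rightarrow> ('x \<Rightarrow> real^'d) \<Rightarrow> ennreal" where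
  "L_un \<rho> D N f =
     (\<integral>\<^sup>+ p. (\<integral>\<^sup>+ xs.
        ennreal (- ln (exp (f (fst p) \<bullet> f (snd p)) /
                       (exp (f (fst p) \<bullet> f (snd p)) + (\<Sum>i<N. exp (f (fst p) \<bullet> f (xs i))))))
      \<partial>(PiM {..<N} (\<lambda>_. D_neg \<rho> D))) \<partial>(D_sim \<rho> D))"

definition sup_loss_W :: "'c::finite pmf \<Rightarrow> ('c \<Rightarrow> 'x measure) \<Rightarrow> ('x \<Rightarrow> real^'d) \<Rightarrow> ('c \<Rightarrow> real^'d) \<Rightarrow> ennreal" where
  "sup_loss_W \<rho> D f W =
     (\<Sum>c\<in>UNIV. ennreal (pmf \<rho> c) *
        (\<integral>\<^sup>+ x. ennreal (- ln (exp (W c \<bullet> f x) / (\<Sum>c'\<in>UNIV. exp (W c' \<bullet> f x)))) \<partial>(D c)))"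

definition L_sup :: "'c::finite pmf \<Rightarrow> ('c \<Rightarrow> 'x measure) \<Rightarrow> ('x \<Rightarrow> real^'d) \<Rightarrow> ennreal" where
  "L_sup \<rho> D f = (INF W. sup_loss_W \<rho> D f W)"

definition W_mu :: "('c \<Rightarrow> 'x measure) \<Rightarrow> ('x \<Rightarrow> real^'d) \<Rightarrow> 'c \<Rightarrow> real^'d" where
  "W_mu D f c = (\<integral> x. f x \<partial>(D c))"

definition L_sup_mu :: "'c::finite pmf \<Rightarrow> ('c \<Rightarrow> 'x measure) \<Rightarrow> ('x \<Rightarrow> real^'d) \<Rightarrow> ennreal" where
  "L_sup_mu \<rho> D f = sup_loss_W \<rho> D f (W_mu D f)"

definition p_cc :: "'c::finite pmf \<Rightarrow> nat \<Rightarrow> real" where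
  "p_cc \<rho> N = measure (PiM {..<N} (\<lambda>_. measure_pmf \<rho>))
      {cs \<in> space (PiM {..<N} (\<lambda>_. measure_pmf \<rho>)). \<forall>c. \<exists>i<N. cs i = c}"

end

theory Submission
  imports Defs
begin

lemma kernel_meas:
  fixes \<rho> :: "'c pmf" and M :: "'c \<Rightarrow> 'x measure"
  assumes P: "\<And>c. prob_space (M c)" and S: "\<And>c. sets (M c) = sets S"
  shows "M \<in> measurable (measure_pmf \<rho>) (subprob_algebra S)"
proof -
  have "measurable (measure_pmf \<rho>) (subprob_algebra S) = measurable (count_space UNIV) (subprob_algebra S)"
    by (rule measurable_cong_sets) auto
  moreover have "M \<in> measurable (count_space UNIV) (subprob_algebra S)"
  proof (subst measurable_count_space_eq1, rule Pi_I)
    fix c :: 'c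
    show "M c \<in> space (subprob_algebra S)"
      unfolding space_subprob_algebra using P[of c] S[of c] prob_space_imp_subprob_space by blast
  qed
  ultimately show ?thesis by (simp only:)
qed

lemma mix_sets:
  fixes \<rho> :: "'c pmf" and M :: "'c \<Rightarrow> 'x measure"
  assumes S: "\<And>c. sets (M c) = sets S"
  shows "sets (measure_pmf \<rho> \<bind> M) = sets S"
  by (rule sets_bind) (auto simp: S)

lemma mix_prob:
  fixes \<rho> :: "'c pmf" and M :: "'c \<Rightarrow> 'x measure"
  assumes P: "\<And>c. prob_space (M c)" and S: "\<And>c. sets (M c) = sets S"
  shows "prob_space (measure_pmf \<rho> \<bind> M)"
  by (rule measure_pmf.prob_space_bind[OF _ kernel_meas[OF P S]]) (auto simp: P)

lemma mix_nn:
  fixes \<rho> :: "'c::finite pmf" and M :: "'c \<Rightarrow> 'x measure"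
  assumes P: "\<And>c. prob_space (M c)" and S: "\<And>c. sets (M c) = sets S"
    and g: "g \<in> borel_measurable S"
  shows "(\<integral>\<^sup>+x. g x \<partial>(measure_pmf \<rho> \<bind> M)) = (\<Sum>c\<in>UNIV. ennreal (pmf \<rho> c) * (\<integral>\<^sup>+x. g x \<partial>M c))"
proof -
  have "(\<integral>\<^sup>+x. g x \<partial>(measure_pmf \<rho> \<bind> M)) = (\<integral>\<^sup>+c. \<integral>\<^sup>+x. g x \<partial>M c \<partial>measure_pmf \<rho>)"
    by (rule nn_integral_bind[OF g kernel_meas[OF P S]])
  also have "\<dots> = (\<Sum>c\<in>UNIV. (\<integral>\<^sup>+x. g x \<partial>M c) * ennreal (pmf \<rho> c))"
    by (rule nn_integral_measure_pmf_support) auto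
  finally show ?thesis by (simp add: mult.commute)
qed

lemma mix_PiM:
  fixes \<rho> :: "'c::finite pmf" and M :: "'c \<Rightarrow> 'x measure"
  and n :: nat
  assumes P: "\<And>c. prob_space (M c)" and S: "\<And>c. sets (M c) = sets S"
  shows "h \<in> borel_measurable (PiM {..<n} (\<lambda>_. S)) \<Longrightarrow>
    (\<integral>\<^sup>+xs. h xs \<partial>PiM {..<n} (\<lambda>_. measure_pmf \<rho> \<bind> M)) =
    (\<Sum>cs\<in>PiE {..<n} (\<lambda>_. UNIV). ennreal (\<Prod>i<n. pmf \<rho> (cs i)) * (\<integral>\<^sup>+xs. h xs \<partial>PiM {..<n} (\<lambda>i. M (cs i))))"
proof (induction n arbitrary: h)
  case 0
  show ?case by (simp add: PiM_empty)
next
  case (Suc n)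
  define \<nu> where "\<nu> = measure_pmf \<rho> \<bind> M"
  have \<nu>s: "sets \<nu> = sets S" unfolding \<nu>_def using S by (rule mix_sets)
  have \<nu>p: "prob_space \<nu>" unfolding \<nu>_def using P S by (rule mix_prob)
  interpret PS: product_sigma_finite "\<lambda>_. \<nu>"
    by (intro product_sigma_finite.intro) (simp add: prob_space_imp_sigma_finite \<nu>p)
  have ins: "{..<Suc n} = insert n {..<n}" by auto
  have setsPn: "sets (PiM {..<n} (\<lambda>_. \<nu>)) = sets (PiM {..<n} (\<lambda>_. S))"
    by (rule sets_PiM_cong) (auto simp: \<nu>s)
  have setsPn': "sets (PiM {..<n} (\<lambda>i. M (cs i))) = sets (PiM {..<n} (\<lambda>_. S))" for cs
    by (rule sets_PiM_cong) (auto simp: S)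
  have hS[measurable]: "h \<in> borel_measurable (PiM (insert n {..<n}) (\<lambda>_. S))" using Suc.prems ins by simp
  have hm: "h \<in> borel_measurable (PiM (insert n {..<n}) (\<lambda>_. \<nu>))"
  proof -
    have "sets (PiM (insert n {..<n}) (\<lambda>_. \<nu>)) = sets (PiM (insert n {..<n}) (\<lambda>_. S))"
      by (rule sets_PiM_cong) (auto simp: \<nu>s)
    note e = this
    show ?thesis using hS by (simp only: measurable_cong_sets[OF e refl])
  qed
  have hmc: "h \<in> borel_measurable (PiM (insert n {..<n}) (\<lambda>i. M (cs i)))" for cs
  proof -
    have "sets (PiM (insert n {..<n}) (\<lambda>i. M (cs i))) = sets (PiM (insert n {..<n}) (\<lambda>_. S))"
      by (rule sets_PiM_cong) (auto simp: S)
    note e = this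
    show ?thesis using hS by (simp only: measurable_cong_sets[OF e refl])
  qed
  have upd: "(\<lambda>(x,y). h (x(n:=y))) \<in> borel_measurable (PiM {..<n} (\<lambda>_. S) \<Otimes>\<^sub>M S)"
    using measurable_comp[OF measurable_add_dim[of n "{..<n}" "\<lambda>_. S"] hS]
    by (simp add: comp_def case_prod_beta')
  have updc: "(\<lambda>(x,y). h (x(n:=y))) \<in> borel_measurable (PiM {..<n} (\<lambda>_. S) \<Otimes>\<^sub>M M c)" for c
  proof -
    have "sets (PiM {..<n} (\<lambda>_. S) \<Otimes>\<^sub>M M c) = sets (PiM {..<n} (\<lambda>_. S) \<Otimes>\<^sub>M S)"
      by (rule sets_pair_measure_cong) (auto simp: S)
    note e = this
    show ?thesis using upd by (simp only: measurable_cong_sets[OF e refl])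
  qed
  have Hm: "(\<lambda>x. \<integral>\<^sup>+y. h (x(n:=y)) \<partial>M c) \<in> borel_measurable (PiM {..<n} (\<lambda>_. S))" for c
  proof -
    interpret sigma_finite_measure "M c" by (simp add: prob_space_imp_sigma_finite P)
    show ?thesis using updc[of c] by (rule borel_measurable_nn_integral)
  qed
  have Hm\<nu>: "(\<lambda>x. \<integral>\<^sup>+y. h (x(n:=y)) \<partial>M c) \<in> borel_measurable (PiM {..<n} (\<lambda>_. \<nu>))" for c
    using Hm[of c] by (simp only: measurable_cong_sets[OF setsPn refl])
  have sec: "(\<lambda>y. h (x(n:=y))) \<in> borel_measurable S" if "x \<in> space (PiM {..<n} (\<lambda>_. \<nu>))" for x
  proof -
    have "x \<in> space (PiM {..<n} (\<lambda>_. S))" using that sets_eq_imp_space_eq[OF setsPn] by simp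
    from measurable_Pair2[OF upd this] show ?thesis by simp
  qed
  have "(\<integral>\<^sup>+xs. h xs \<partial>PiM {..<Suc n} (\<lambda>_. \<nu>))
      = (\<integral>\<^sup>+x. \<integral>\<^sup>+y. h (x(n:=y)) \<partial>\<nu> \<partial>PiM {..<n} (\<lambda>_. \<nu>))"
    unfolding ins by (rule PS.product_nn_integral_insert[OF _ _ hm]) auto
  also have "\<dots> = (\<integral>\<^sup>+x. (\<Sum>c\<in>UNIV. ennreal (pmf \<rho> c) * (\<integral>\<^sup>+y. h (x(n:=y)) \<partial>M c)) \<partial>PiM {..<n} (\<lambda>_. \<nu>))"
    by (rule nn_integral_cong) (simp add: \<nu>_def mix_nn[OF P S sec])
  also have "\<dots> = (\<Sum>c\<in>UNIV. ennreal (pmf \<rho> c) * (\<integral>\<^sup>+x. (\<integral>\<^sup>+y. h (x(n:=y)) \<partial>M c) \<partial>PiM {..<n} (\<lambda>_. \<nu>)))"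
    using Hm\<nu> by (subst nn_integral_sum) (auto simp: nn_integral_cmult)
  also have "\<dots> = (\<Sum>c\<in>UNIV. ennreal (pmf \<rho> c) * (\<Sum>cs\<in>PiE {..<n} (\<lambda>_. UNIV). ennreal (\<Prod>i<n. pmf \<rho> (cs i)) *
       (\<integral>\<^sup>+x. (\<integral>\<^sup>+y. h (x(n:=y)) \<partial>M c) \<partial>PiM {..<n} (\<lambda>i. M (cs i)))))"
    unfolding \<nu>_def by (intro sum.cong refl arg_cong2[where f="(*)"] Suc.IH[OF Hm])
  also have "\<dots> = (\<Sum>(c,cs)\<in>UNIV \<times> PiE {..<n} (\<lambda>_. UNIV). ennreal (pmf \<rho> c * (\<Prod>i<n. pmf \<rho> (cs i))) *
       (\<integral>\<^sup>+x. (\<integral>\<^sup>+y. h (x(n:=y)) \<partial>M c) \<partial>PiM {..<n} (\<lambda>i. M (cs i))))"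
    by (simp add: sum.cartesian_product[symmetric] sum_distrib_left ennreal_mult mult.assoc prod_nonneg)
  also have "\<dots> = (\<Sum>(c,cs)\<in>UNIV \<times> PiE {..<n} (\<lambda>_. UNIV).
       ennreal (\<Prod>i\<in>insert n {..<n}. pmf \<rho> ((cs(n:=c)) i)) *
       (\<integral>\<^sup>+xs. h xs \<partial>PiM (insert n {..<n}) (\<lambda>i. M ((cs(n:=c)) i))))"
  proof (rule sum.cong[OF refl], clarify)
    fix c cs
    interpret PC: product_sigma_finite "\<lambda>i. M ((cs(n:=c)) i)"
      by (intro product_sigma_finite.intro) (simp add: prob_space_imp_sigma_finite P)
    have e1: "(\<Prod>i\<in>insert n {..<n}. pmf \<rho> ((cs(n:=c)) i)) = pmf \<rho> c * (\<Prod>i<n. pmf \<rho> (cs i))"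
      by (simp add: prod.insert)
    have e2: "PiM {..<n} (\<lambda>i. M ((cs(n:=c)) i)) = PiM {..<n} (\<lambda>i. M (cs i))"
      by (rule PiM_cong) auto
    have "(\<integral>\<^sup>+xs. h xs \<partial>PiM (insert n {..<n}) (\<lambda>i. M ((cs(n:=c)) i)))
        = (\<integral>\<^sup>+x. (\<integral>\<^sup>+y. h (x(n:=y)) \<partial>M c) \<partial>PiM {..<n} (\<lambda>i. M (cs i)))"
    proof -
      have "(\<integral>\<^sup>+xs. h xs \<partial>PiM (insert n {..<n}) (\<lambda>i. M ((cs(n:=c)) i)))
        = (\<integral>\<^sup>+x. (\<integral>\<^sup>+y. h (x(n:=y)) \<partial>M ((cs(n:=c)) n)) \<partial>PiM {..<n} (\<lambda>i. M ((cs(n:=c)) i)))"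
        by (rule PC.product_nn_integral_insert[OF _ _ hmc[of "cs(n:=c)"]]) auto
      also have "\<dots> = (\<integral>\<^sup>+x. (\<integral>\<^sup>+y. h (x(n:=y)) \<partial>M c) \<partial>PiM {..<n} (\<lambda>i. M (cs i)))"
        by (simp only: e2 fun_upd_same)
      finally show ?thesis .
    qed
    then show "ennreal (pmf \<rho> c * (\<Prod>i<n. pmf \<rho> (cs i))) *
       (\<integral>\<^sup>+x. (\<integral>\<^sup>+y. h (x(n:=y)) \<partial>M c) \<partial>PiM {..<n} (\<lambda>i. M (cs i))) =
       ennreal (\<Prod>i\<in>insert n {..<n}. pmf \<rho> ((cs(n:=c)) i)) *
       (\<integral>\<^sup>+xs. h xs \<partial>PiM (insert n {..<n}) (\<lambda>i. M ((cs(n:=c)) i)))"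
      by (simp add: e1)
  qed
  also have "\<dots> = (\<Sum>cs\<in>PiE (insert n {..<n}) (\<lambda>_. UNIV).
       ennreal (\<Prod>i\<in>insert n {..<n}. pmf \<rho> (cs i)) * (\<integral>\<^sup>+xs. h xs \<partial>PiM (insert n {..<n}) (\<lambda>i. M (cs i))))"
  proof -
    have inj: "inj_on (\<lambda>(y, g). g(n := y)) (UNIV \<times> PiE {..<n} (\<lambda>_. UNIV))"
    proof (rule inj_onI, clarify)
      fix y g y' g'
      assume g: "g \<in> PiE {..<n} (\<lambda>_. UNIV)" and g': "g' \<in> PiE {..<n} (\<lambda>_. UNIV)"
        and eq: "g(n := y) = g'(n := y')"
      have "y = y'" using fun_cong[OF eq, of n] by simp
      moreover have "g = g'"
      proof
        fix i show "g i = g' i"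
          using fun_cong[OF eq, of i] g g' by (cases "i = n") (auto simp: PiE_def extensional_def)
      qed
      ultimately show "y = y' \<and> g = g'" by simp
    qed
    show ?thesis
      unfolding PiE_insert_eq using inj
      by (subst sum.reindex) (auto simp: case_prod_beta' intro!: sum.cong)
  qed
  finally show ?case unfolding \<nu>_def ins .
qed


lemma lse_tangent:
  fixes z w :: "'i \<Rightarrow> real" and A :: real
  assumes J: "finite J" and A: "A \<ge> 0" and Zp: "A + (\<Sum>j\<in>J. exp (w j)) > 0"
  shows "ln (A + (\<Sum>j\<in>J. exp (w j))) + (\<Sum>j\<in>J. exp (w j) / (A + (\<Sum>k\<in>J. exp (w k))) * (z j - w j))
         \<le> ln (A + (\<Sum>j\<in>J. exp (z j)))"
proof -
  define Z where "Z = A + (\<Sum>j\<in>J. exp (w j))"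
  define m where "m = (\<Sum>j\<in>J. exp (w j) / Z * (z j - w j))"
  have Zp': "Z > 0" using Zp Z_def by simp
  have Zm: "Z * m = (\<Sum>j\<in>J. exp (w j) * (z j - w j))"
    unfolding m_def sum_distrib_left using Zp' by (intro sum.cong) auto
  have d: "exp (w j) * exp m * (1 + (z j - w j) - m) \<le> exp (z j)" for j
  proof -
    have "exp m * (1 + (z j - w j - m)) \<le> exp m * exp (z j - w j - m)"
      by (intro mult_left_mono exp_ge_add_one_self) auto
    also have "\<dots> = exp (z j - w j)" by (simp add: exp_add[symmetric])
    finally have "exp (w j) * (exp m * (1 + (z j - w j - m))) \<le> exp (w j) * exp (z j - w j)"
      by (intro mult_left_mono) auto
    also have "\<dots> = exp (z j)" by (simp add: exp_add[symmetric])
    finally show ?thesis by (simp add: algebra_simps)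
  qed
  have a: "A * exp m * (1 - m) \<le> A"
  proof -
    have "exp m * (1 + (- m)) \<le> exp m * exp (- m)"
      by (intro mult_left_mono exp_ge_add_one_self) auto
    also have "\<dots> = 1" by (simp add: exp_minus)
    finally have "A * (exp m * (1 + (- m))) \<le> A * 1" using A by (intro mult_left_mono) auto
    then show ?thesis by (simp add: algebra_simps)
  qed
  have "Z * exp m = A * exp m * (1 - m) + (\<Sum>j\<in>J. exp (w j) * exp m * (1 + (z j - w j) - m))"
  proof -
    have "(\<Sum>j\<in>J. exp (w j) * exp m * (1 + (z j - w j) - m))
        = exp m * ((1 - m) * (\<Sum>j\<in>J. exp (w j)) + (\<Sum>j\<in>J. exp (w j) * (z j - w j)))"
    proof -
      have "(\<Sum>j\<in>J. exp (w j) * exp m * (1 + (z j - w j) - m))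
          = (\<Sum>j\<in>J. exp m * ((1 - m) * exp (w j)) + exp m * (exp (w j) * (z j - w j)))"
        by (intro sum.cong) (auto simp: algebra_simps)
      also have "\<dots> = exp m * ((1 - m) * (\<Sum>j\<in>J. exp (w j))) + exp m * (\<Sum>j\<in>J. exp (w j) * (z j - w j))"
        by (simp only: sum.distrib sum_distrib_left)
      finally show ?thesis by (simp only: distrib_left)
    qed
    also have "\<dots> = exp m * ((1 - m) * (Z - A) + Z * m)" proof -
      have ZA: "(\<Sum>j\<in>J. exp (w j)) = Z - A" by (simp add: Z_def)
      show ?thesis by (simp only: Zm[symmetric] ZA)
    qed
    finally show ?thesis by (simp add: algebra_simps)
  qed
  also have "\<dots> \<le> A + (\<Sum>j\<in>J. exp (z j))"
    using a d by (intro add_mono sum_mono) auto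
  finally have le: "Z * exp m \<le> A + (\<Sum>j\<in>J. exp (z j))" .
  have "ln Z + m = ln (Z * exp m)" using Zp' by (simp add: ln_mult)
  also have "\<dots> \<le> ln (A + (\<Sum>j\<in>J. exp (z j)))"
  proof -
    have pos: "0 < Z * exp m" using Zp' by simp
    have pos2: "0 < A + (\<Sum>j\<in>J. exp (z j))" using le pos by linarith
    show ?thesis using le pos pos2 by simp
  qed
  finally show ?thesis unfolding Z_def m_def .
qed

lemma nn_lower:
  fixes g h :: "'a \<Rightarrow> real"
  assumes M: "prob_space M" and gm: "g \<in> borel_measurable M" and g0: "\<And>y. y \<in> space M \<Longrightarrow> 0 \<le> g y"
    and hi: "integrable M h" and h0: "integral\<^sup>L M h = 0"
    and le: "\<And>y. y \<in> space M \<Longrightarrow> K + h y \<le> g y"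
  shows "ennreal K \<le> (\<integral>\<^sup>+y. ennreal (g y) \<partial>M)"
proof (cases "integrable M g")
  case True
  interpret prob_space M by (rule M)
  have "(\<integral>\<^sup>+y. ennreal (g y) \<partial>M) = ennreal (integral\<^sup>L M g)"
    by (rule nn_integral_eq_integral[OF True]) (auto intro!: AE_I2 g0)
  moreover have "K \<le> integral\<^sup>L M g"
  proof -
    have "integral\<^sup>L M (\<lambda>y. K + h y) = K"
      using hi h0 by (simp add: integral_add prob_space)
    moreover have "integral\<^sup>L M (\<lambda>y. K + h y) \<le> integral\<^sup>L M g"
      using hi True le by (intro integral_mono) auto
    ultimately show ?thesis by simp
  qed
  ultimately show ?thesis by (simp add: ennreal_leI)
next
  case False
  then have "\<not> ((\<integral>\<^sup>+x. ennreal (norm (g x)) \<partial>M) < \<infinity>)"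
    using gm by (simp add: integrable_iff_bounded)
  then have inf: "(\<integral>\<^sup>+x. ennreal (norm (g x)) \<partial>M) = \<infinity>" by (simp add: less_top[symmetric])
  have "(\<integral>\<^sup>+x. ennreal (norm (g x)) \<partial>M) = (\<integral>\<^sup>+y. ennreal (g y) \<partial>M)"
    by (rule nn_integral_cong) (simp add: g0)
  with inf show ?thesis by simp
qed

lemma comp_int:
  fixes D :: "'c \<Rightarrow> 'x measure" and f :: "'x \<Rightarrow> real^'d"
  assumes P: "\<And>c. prob_space (D c)" and S: "\<And>c. sets (D c) = sets S" and fm: "f \<in> borel_measurable S"
    and I: "\<And>c. integrable (D c) f" and i: "i < N"
  shows "integrable (PiM {..<N} (\<lambda>i. D (cs i))) (\<lambda>xs. a \<bullet> f (xs i))"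
    and "(\<integral>xs. a \<bullet> f (xs i) \<partial>PiM {..<N} (\<lambda>i. D (cs i))) = a \<bullet> W_mu D f (cs i)"
proof -
  have dist: "distr (PiM {..<N} (\<lambda>i. D (cs i))) (D (cs i)) (\<lambda>\<omega>. \<omega> i) = D (cs i)"
    by (rule distr_PiM_component) (auto simp: P i)
  have mc: "(\<lambda>\<omega>. \<omega> i) \<in> measurable (PiM {..<N} (\<lambda>i. D (cs i))) (D (cs i))"
    using i by simp
  have fm': "f \<in> borel_measurable (D (cs i))"
    using fm by (simp only: measurable_cong_sets[OF S refl])
  have gm: "(\<lambda>y. a \<bullet> f y) \<in> borel_measurable (D (cs i))"
    using fm' by measurable
  have int1: "integrable (D (cs i)) (\<lambda>y. a \<bullet> f y)" using I by auto
  show "integrable (PiM {..<N} (\<lambda>i. D (cs i))) (\<lambda>xs. a \<bullet> f (xs i))"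
    using integrable_distr_eq[OF mc gm] dist int1 by simp
  have "(\<integral>xs. a \<bullet> f (xs i) \<partial>PiM {..<N} (\<lambda>i. D (cs i))) = (\<integral>y. a \<bullet> f y \<partial>D (cs i))"
    using integral_distr[OF mc gm] dist by simp
  also have "\<dots> = a \<bullet> W_mu D f (cs i)" using I by (simp add: W_mu_def)
  finally show "(\<integral>xs. a \<bullet> f (xs i) \<partial>PiM {..<N} (\<lambda>i. D (cs i))) = a \<bullet> W_mu D f (cs i)" .
qed


definition lossf :: "('x \<Rightarrow> real^'d) \<Rightarrow> nat \<Rightarrow> 'x \<times> 'x \<Rightarrow> (nat \<Rightarrow> 'x) \<Rightarrow> real" where
  "lossf f N p xs = - ln (exp (f (fst p) \<bullet> f (snd p)) /
                       (exp (f (fst p) \<bullet> f (snd p)) + (\<Sum>i<N. exp (f (fst p) \<bullet> f (xs i)))))"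

lemma neg_ln_ratio:
  fixes u S :: real assumes "S \<ge> 0"
  shows "- ln (exp u / (exp u + S)) = ln (exp u + S) - u"
proof -
  have "0 < exp u + S" using assms by (simp add: add_pos_nonneg)
  then show ?thesis by (simp add: ln_divide_pos)
qed

lemma lossf_eq: "lossf f N (x, y) xs = ln (exp (f x \<bullet> f y) + (\<Sum>i<N. exp (f x \<bullet> f (xs i)))) - f x \<bullet> f y"
  unfolding lossf_def by (simp add: neg_ln_ratio sum_nonneg)

lemma lossf_meas:
  assumes fm[measurable]: "f \<in> borel_measurable S" and A: "sets A = sets (S \<Otimes>\<^sub>M S)"
    and B: "sets B = sets (PiM {..<N} (\<lambda>_. S))"
  shows "(\<lambda>(p, xs). ennreal (lossf f N p xs)) \<in> borel_measurable (A \<Otimes>\<^sub>M B)"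
proof -
  have e: "sets (A \<Otimes>\<^sub>M B) = sets ((S \<Otimes>\<^sub>M S) \<Otimes>\<^sub>M PiM {..<N} (\<lambda>_. S))"
    by (rule sets_pair_measure_cong[OF A B])
  have "(\<lambda>(p, xs). ennreal (lossf f N p xs)) \<in> borel_measurable ((S \<Otimes>\<^sub>M S) \<Otimes>\<^sub>M PiM {..<N} (\<lambda>_. S))"
    unfolding lossf_def by measurable
  then show ?thesis by (simp only: measurable_cong_sets[OF e refl])
qed

lemma stage1:
  fixes D :: "'c \<Rightarrow> 'x measure" and f :: "'x \<Rightarrow> real^'d" and N :: nat and cs :: "nat \<Rightarrow> 'c"
  assumes P: "\<And>c. prob_space (D c)" and S: "\<And>c. sets (D c) = sets S" and fm: "f \<in> borel_measurable S"
    and I: "\<And>c. integrable (D c) f"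
  shows "ennreal (ln (exp u + (\<Sum>i<N. exp (a \<bullet> W_mu D f (cs i)))) - u)
     \<le> (\<integral>\<^sup>+xs. ennreal (ln (exp u + (\<Sum>i<N. exp (a \<bullet> f (xs i)))) - u) \<partial>PiM {..<N} (\<lambda>i. D (cs i)))"
proof -
  define m where "m i = a \<bullet> W_mu D f (cs i)" for i
  define Z where "Z = exp u + (\<Sum>i<N. exp (m i))"
  have Zp: "Z > 0" unfolding Z_def by (simp add: add_pos_nonneg sum_nonneg)
  have fD[measurable]: "f \<in> borel_measurable (D c)" for c
    using fm by (simp only: measurable_cong_sets[OF S refl])
  have PS: "prob_space (PiM {..<N} (\<lambda>i. D (cs i)))" by (rule prob_space_PiM) (simp add: P)
  then interpret PS: prob_space "PiM {..<N} (\<lambda>i. D (cs i))" .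
  have ci: "integrable (PiM {..<N} (\<lambda>i. D (cs i))) (\<lambda>xs. a \<bullet> f (xs i))" if "i < N" for i
    using comp_int(1)[OF P S fm I that] .
  have cI: "(\<integral>xs. a \<bullet> f (xs i) \<partial>PiM {..<N} (\<lambda>i. D (cs i))) = m i" if "i < N" for i
    using comp_int(2)[OF P S fm I that] by (simp add: m_def)
  have "ennreal (ln Z - u) \<le> (\<integral>\<^sup>+xs. ennreal (ln (exp u + (\<Sum>i<N. exp (a \<bullet> f (xs i)))) - u) \<partial>PiM {..<N} (\<lambda>i. D (cs i)))"
  proof (rule nn_lower[OF PS, where h = "\<lambda>xs. \<Sum>i<N. exp (m i) / Z * (a \<bullet> f (xs i) - m i)"])
    show "(\<lambda>xs. ln (exp u + (\<Sum>i<N. exp (a \<bullet> f (xs i)))) - u) \<in> borel_measurable (PiM {..<N} (\<lambda>i. D (cs i)))"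
      by measurable
    show "0 \<le> ln (exp u + (\<Sum>i<N. exp (a \<bullet> f (xs i)))) - u" for xs
    proof -
      have "u = ln (exp u)" by simp
      also have "\<dots> \<le> ln (exp u + (\<Sum>i<N. exp (a \<bullet> f (xs i))))"
        by (subst ln_le_cancel_iff) (auto simp: sum_nonneg add_pos_nonneg)
      finally show ?thesis by simp
    qed
    show "integrable (PiM {..<N} (\<lambda>i. D (cs i))) (\<lambda>xs. \<Sum>i<N. exp (m i) / Z * (a \<bullet> f (xs i) - m i))"
    proof (rule Bochner_Integration.integrable_sum)
      fix i assume "i \<in> {..<N}"
      then have "integrable (PiM {..<N} (\<lambda>i. D (cs i))) (\<lambda>xs. a \<bullet> f (xs i))" using ci by simp
      then have "integrable (PiM {..<N} (\<lambda>i. D (cs i))) (\<lambda>xs. a \<bullet> f (xs i) - m i)"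
        by (rule Bochner_Integration.integrable_diff) simp
      then show "integrable (PiM {..<N} (\<lambda>i. D (cs i))) (\<lambda>xs. exp (m i) / Z * (a \<bullet> f (xs i) - m i))"
        by (rule integrable_mult_right)
    qed
    have "(\<integral>xs. (\<Sum>i<N. exp (m i) / Z * (a \<bullet> f (xs i) - m i)) \<partial>PiM {..<N} (\<lambda>i. D (cs i)))
        = (\<Sum>i<N. exp (m i) / Z * ((\<integral>xs. a \<bullet> f (xs i) \<partial>PiM {..<N} (\<lambda>i. D (cs i))) - m i))"
      using ci by (simp add: Bochner_Integration.integral_sum Bochner_Integration.integrable_diff PS.integrable_const Bochner_Integration.integral_diff PS.prob_space)
    also have "\<dots> = 0" using cI by simp
    finally show "(\<integral>xs. (\<Sum>i<N. exp (m i) / Z * (a \<bullet> f (xs i) - m i)) \<partial>PiM {..<N} (\<lambda>i. D (cs i))) = 0" .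
    show "ln Z - u + (\<Sum>i<N. exp (m i) / Z * (a \<bullet> f (xs i) - m i)) \<le> ln (exp u + (\<Sum>i<N. exp (a \<bullet> f (xs i)))) - u" for xs
      using lse_tangent[of "{..<N}" "exp u" m "\<lambda>i. a \<bullet> f (xs i)"] Zp unfolding Z_def by simp
  qed
  then show ?thesis unfolding Z_def m_def .
qed

lemma stage2:
  fixes f :: "'x \<Rightarrow> real^'d"
  assumes P: "prob_space M" and fm: "f \<in> borel_measurable M" and I: "integrable M f" and B: "B \<ge> 0"
  shows "ennreal (ln (exp (a \<bullet> integral\<^sup>L M f) + B) - a \<bullet> integral\<^sup>L M f)
     \<le> (\<integral>\<^sup>+y. ennreal (ln (exp (a \<bullet> f y) + B) - a \<bullet> f y) \<partial>M)"
proof -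
  interpret PM: prob_space M by (rule P)
  define m where "m = a \<bullet> integral\<^sup>L M f"
  define p where "p = exp m / (B + exp m)"
  have intm: "(\<integral>y. a \<bullet> f y \<partial>M) = m" using I by (simp add: m_def)
  have "ennreal (ln (exp m + B) - m) \<le> (\<integral>\<^sup>+y. ennreal (ln (exp (a \<bullet> f y) + B) - a \<bullet> f y) \<partial>M)"
  proof (rule nn_lower[OF P, where h = "\<lambda>y. (p - 1) * (a \<bullet> f y - m)"])
    show "(\<lambda>y. ln (exp (a \<bullet> f y) + B) - a \<bullet> f y) \<in> borel_measurable M"
      using fm by measurable
    show "0 \<le> ln (exp (a \<bullet> f y) + B) - a \<bullet> f y" for y
    proof -
      have "a \<bullet> f y = ln (exp (a \<bullet> f y))" by simp
      also have "\<dots> \<le> ln (exp (a \<bullet> f y) + B)"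
        using B by (subst ln_le_cancel_iff) (auto simp: add_pos_nonneg)
      finally show ?thesis by simp
    qed
    show "integrable M (\<lambda>y. (p - 1) * (a \<bullet> f y - m))"
      using I by (intro integrable_mult_right Bochner_Integration.integrable_diff PM.integrable_const) auto
    show "(\<integral>y. (p - 1) * (a \<bullet> f y - m) \<partial>M) = 0"
      using I intm by (simp add: Bochner_Integration.integral_diff PM.prob_space)
    show "ln (exp m + B) - m + (p - 1) * (a \<bullet> f y - m) \<le> ln (exp (a \<bullet> f y) + B) - a \<bullet> f y" for y
    proof -
      have "ln (B + exp m) + p * (a \<bullet> f y - m) \<le> ln (B + exp (a \<bullet> f y))"
        using lse_tangent[of "{0::nat}" B "\<lambda>_. m" "\<lambda>_. a \<bullet> f y"] B unfolding p_def
        by (simp add: add_nonneg_pos)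
      then show ?thesis by (simp add: add.commute algebra_simps)
    qed
  qed
  then show ?thesis unfolding m_def .
qed


lemma point:
  fixes D :: "'c::finite \<Rightarrow> 'x measure" and f :: "'x \<Rightarrow> real^'d" and N :: nat and cs :: "nat \<Rightarrow> 'c"
  assumes P: "\<And>c. prob_space (D c)" and S: "\<And>c. sets (D c) = sets S" and fm: "f \<in> borel_measurable S"
    and I: "\<And>c. integrable (D c) f" and cover: "\<forall>c'. \<exists>i<N. cs i = c'"
  shows "ennreal (- ln (exp (W_mu D f c \<bullet> f x) / (\<Sum>c'\<in>UNIV. exp (W_mu D f c' \<bullet> f x))))
     \<le> (\<integral>\<^sup>+y. (\<integral>\<^sup>+xs. ennreal (lossf f N (x,y) xs) \<partial>PiM {..<N} (\<lambda>i. D (cs i))) \<partial>D c)"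
proof -
  define a where "a = f x"
  define B where "B = (\<Sum>i<N. exp (a \<bullet> W_mu D f (cs i)))"
  have B0: "B \<ge> 0" by (simp add: B_def sum_nonneg)
  have fD: "f \<in> borel_measurable (D c)"
    using fm by (simp only: measurable_cong_sets[OF S refl])
  have s1: "ennreal (ln (exp (a \<bullet> f y) + B) - a \<bullet> f y)
      \<le> (\<integral>\<^sup>+xs. ennreal (lossf f N (x,y) xs) \<partial>PiM {..<N} (\<lambda>i. D (cs i)))" for y
    unfolding lossf_eq a_def B_def by (rule stage1[OF P S fm I])
  have s2: "ennreal (ln (exp (a \<bullet> W_mu D f c) + B) - a \<bullet> W_mu D f c)
      \<le> (\<integral>\<^sup>+y. ennreal (ln (exp (a \<bullet> f y) + B) - a \<bullet> f y) \<partial>D c)"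
    unfolding W_mu_def by (rule stage2[OF P fD I B0])
  have s3: "- ln (exp (W_mu D f c \<bullet> f x) / (\<Sum>c'\<in>UNIV. exp (W_mu D f c' \<bullet> f x)))
      \<le> ln (exp (a \<bullet> W_mu D f c) + B) - a \<bullet> W_mu D f c"
  proof -
    define T where "T = (\<Sum>c'\<in>UNIV. exp (W_mu D f c' \<bullet> f x))"
    have Tp: "T > 0" unfolding T_def by (rule sum_pos) auto
    have univ: "(UNIV :: 'c set) = cs ` {..<N}"
    proof -
      have "x \<in> cs ` {..<N}" for x
      proof -
        from cover obtain i where "i < N" "cs i = x" by blast
        then show ?thesis by auto
      qed
      then show ?thesis by auto
    qed
    have "T = (\<Sum>c'\<in>cs ` {..<N}. exp (a \<bullet> W_mu D f c'))"
      unfolding T_def a_def by (subst univ[symmetric]) (simp add: inner_commute)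
    also have "\<dots> \<le> (\<Sum>i<N. exp (a \<bullet> W_mu D f (cs i)))"
      using sum_image_le[of "{..<N}" "\<lambda>c'. exp (a \<bullet> W_mu D f c')" cs] by (simp add: comp_def)
    finally have TB: "T \<le> exp (a \<bullet> W_mu D f c) + B" unfolding B_def
      by (smt (verit) exp_gt_zero)
    have "- ln (exp (W_mu D f c \<bullet> f x) / T) = ln T - a \<bullet> W_mu D f c"
      using Tp by (simp add: ln_divide_pos a_def inner_commute)
    also have "\<dots> \<le> ln (exp (a \<bullet> W_mu D f c) + B) - a \<bullet> W_mu D f c"
      using TB Tp by simp
    finally show ?thesis unfolding T_def .
  qed
  have "ennreal (- ln (exp (W_mu D f c \<bullet> f x) / (\<Sum>c'\<in>UNIV. exp (W_mu D f c' \<bullet> f x))))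
      \<le> ennreal (ln (exp (a \<bullet> W_mu D f c) + B) - a \<bullet> W_mu D f c)"
    using s3 by (rule ennreal_leI)
  also have "\<dots> \<le> (\<integral>\<^sup>+y. ennreal (ln (exp (a \<bullet> f y) + B) - a \<bullet> f y) \<partial>D c)" by (rule s2)
  also have "\<dots> \<le> (\<integral>\<^sup>+y. (\<integral>\<^sup>+xs. ennreal (lossf f N (x,y) xs) \<partial>PiM {..<N} (\<lambda>i. D (cs i))) \<partial>D c)"
    by (rule nn_integral_mono) (rule s1)
  finally show ?thesis .
qed

lemma G_meas:
  fixes f :: "'x \<Rightarrow> real^'d" and N :: nat
  assumes fm: "f \<in> borel_measurable S" and A: "sets A = sets (S \<Otimes>\<^sub>M S)"
    and B: "sets B = sets (PiM {..<N} (\<lambda>_. S))" and Bp: "prob_space B"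
  shows "(\<lambda>p. \<integral>\<^sup>+xs. ennreal (lossf f N p xs) \<partial>B) \<in> borel_measurable A"
proof -
  interpret PB: sigma_finite_measure B by (simp add: prob_space_imp_sigma_finite Bp)
  show ?thesis using lossf_meas[OF fm A B] by (rule PB.borel_measurable_nn_integral)
qed

lemma Tlow:
  fixes D :: "'c::finite \<Rightarrow> 'x measure" and f :: "'x \<Rightarrow> real^'d" and N :: nat and cs :: "nat \<Rightarrow> 'c"
  assumes P: "\<And>c. prob_space (D c)" and S: "\<And>c. sets (D c) = sets S" and fm: "f \<in> borel_measurable S"
    and I: "\<And>c. integrable (D c) f" and cover: "\<forall>c'. \<exists>i<N. cs i = c'"
  shows "(\<integral>\<^sup>+x. ennreal (- ln (exp (W_mu D f c \<bullet> f x) / (\<Sum>c'\<in>UNIV. exp (W_mu D f c' \<bullet> f x)))) \<partial>D c)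
     \<le> (\<integral>\<^sup>+p. (\<integral>\<^sup>+xs. ennreal (lossf f N p xs) \<partial>PiM {..<N} (\<lambda>i. D (cs i))) \<partial>(D c \<Otimes>\<^sub>M D c))"
proof -
  interpret DC: sigma_finite_measure "D c" by (simp add: prob_space_imp_sigma_finite P)
  have Gm: "(\<lambda>p. \<integral>\<^sup>+xs. ennreal (lossf f N p xs) \<partial>PiM {..<N} (\<lambda>i. D (cs i))) \<in> borel_measurable (D c \<Otimes>\<^sub>M D c)"
    by (rule G_meas[OF fm]) (auto intro!: sets_pair_measure_cong sets_PiM_cong prob_space_PiM simp: S P)
  have "(\<integral>\<^sup>+x. ennreal (- ln (exp (W_mu D f c \<bullet> f x) / (\<Sum>c'\<in>UNIV. exp (W_mu D f c' \<bullet> f x)))) \<partial>D c)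
     \<le> (\<integral>\<^sup>+x. \<integral>\<^sup>+y. (\<integral>\<^sup>+xs. ennreal (lossf f N (x,y) xs) \<partial>PiM {..<N} (\<lambda>i. D (cs i))) \<partial>D c \<partial>D c)"
    by (rule nn_integral_mono) (rule point[OF P S fm I cover])
  also have "\<dots> = (\<integral>\<^sup>+p. (\<integral>\<^sup>+xs. ennreal (lossf f N p xs) \<partial>PiM {..<N} (\<lambda>i. D (cs i))) \<partial>(D c \<Otimes>\<^sub>M D c))"
    by (rule DC.nn_integral_fst[OF Gm])
  finally show ?thesis .
qed

lemma pcc_eq:
  fixes \<rho> :: "'c::finite pmf" and N :: nat
  shows "ennreal (p_cc \<rho> N) = (\<Sum>cs\<in>PiE {..<N} (\<lambda>_. UNIV).
           ennreal (\<Prod>i<N. pmf \<rho> (cs i)) * indicator {cs. \<forall>c. \<exists>i<N. cs i = c} cs)"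
proof -
  let ?R = "\<lambda>c. return (count_space UNIV) c"
  let ?P = "PiM {..<N} (\<lambda>_. measure_pmf \<rho>)"
  have eq\<rho>: "measure_pmf \<rho> \<bind> ?R = measure_pmf \<rho>" by (rule bind_return'') simp
  define A where "A = {cs \<in> space ?P. \<forall>c. \<exists>i<N. cs i = c}"
  have spP: "space ?P = PiE {..<N} (\<lambda>_. UNIV)" by (simp add: space_PiM)
  have setsP: "sets ?P = sets (PiM {..<N} (\<lambda>_. count_space UNIV))"
    by (rule sets_PiM_cong) auto
  have Asets: "A \<in> sets ?P"
    unfolding A_def by measurable
  interpret PP: prob_space ?P by (rule prob_space_PiM) (simp add: measure_pmf.prob_space_axioms)
  have "ennreal (p_cc \<rho> N) = emeasure ?P A"
    unfolding p_cc_def A_def[symmetric] by (simp add: PP.emeasure_eq_measure)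
  also have "\<dots> = (\<integral>\<^sup>+cs. indicator A cs \<partial>?P)" using Asets by simp
  also have "\<dots> = (\<integral>\<^sup>+cs. indicator A cs \<partial>PiM {..<N} (\<lambda>_. measure_pmf \<rho> \<bind> ?R))"
    by (simp only: eq\<rho>)
  also have "\<dots> = (\<Sum>cs\<in>PiE {..<N} (\<lambda>_. UNIV). ennreal (\<Prod>i<N. pmf \<rho> (cs i)) *
       (\<integral>\<^sup>+xs. indicator A xs \<partial>PiM {..<N} (\<lambda>i. ?R (cs i))))"
  proof (rule mix_PiM)
    show "prob_space (?R c)" for c by (rule prob_space_return) simp
    show "sets (?R c) = sets (count_space UNIV)" for c by simp
    have "(indicator A :: _ \<Rightarrow> ennreal) \<in> borel_measurable ?P" using Asets by simp
    then show "(indicator A :: _ \<Rightarrow> ennreal) \<in> borel_measurable (PiM {..<N} (\<lambda>_. count_space UNIV))"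
      by (simp only: measurable_cong_sets[OF setsP refl])
  qed
  also have "\<dots> = (\<Sum>cs\<in>PiE {..<N} (\<lambda>_. UNIV).
           ennreal (\<Prod>i<N. pmf \<rho> (cs i)) * indicator {cs. \<forall>c. \<exists>i<N. cs i = c} cs)"
  proof (rule sum.cong[OF refl])
    fix cs assume cs: "cs \<in> PiE {..<N} (\<lambda>_. UNIV :: 'c set)"
    have "PiM {..<N} (\<lambda>i. ?R (cs i)) = return (PiM {..<N} (\<lambda>_. count_space UNIV)) (restrict cs {..<N})"
      by (rule PiM_return) auto
    also have "restrict cs {..<N} = cs" using cs by (simp add: extensional_restrict PiE_def)
    finally have r: "PiM {..<N} (\<lambda>i. ?R (cs i)) = return (PiM {..<N} (\<lambda>_. count_space UNIV)) cs" .
    have csp: "cs \<in> space (PiM {..<N} (\<lambda>_. count_space UNIV))" using cs by (simp add: space_PiM)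
    have "(indicator A :: _ \<Rightarrow> ennreal) \<in> borel_measurable ?P" using Asets by simp
    then have im: "(indicator A :: _ \<Rightarrow> ennreal) \<in> borel_measurable (PiM {..<N} (\<lambda>_. count_space UNIV))"
      by (simp only: measurable_cong_sets[OF setsP refl])
    have "(\<integral>\<^sup>+xs. indicator A xs \<partial>PiM {..<N} (\<lambda>i. ?R (cs i))) = indicator A cs"
      unfolding r by (rule nn_integral_return[OF csp im])
    also have "\<dots> = indicator {cs. \<forall>c. \<exists>i<N. cs i = c} cs"
      using cs by (simp add: A_def spP indicator_def)
    finally show "ennreal (\<Prod>i<N. pmf \<rho> (cs i)) * (\<integral>\<^sup>+xs. indicator A xs \<partial>PiM {..<N} (\<lambda>i. ?R (cs i)))
        = ennreal (\<Prod>i<N. pmf \<rho> (cs i)) * indicator {cs. \<forall>c. \<exists>i<N. cs i = c} cs" by simp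
  qed
  finally show ?thesis .
qed


theorem lemma3p2:
  fixes \<rho> :: "'c::finite pmf" and D :: "'c \<Rightarrow> 'x measure" and S :: "'x measure"
    and f :: "'x \<Rightarrow> real^'d" and N :: nat
  assumes "\<forall>c. pmf \<rho> c > 0"
    and "\<forall>c. prob_space (D c)"
    and "\<forall>c. sets (D c) = sets S"
    and "f \<in> borel_measurable S"
    and "\<forall>c. integrable (D c) f"
    and "N \<ge> CARD('c)"
  shows "L_sup \<rho> D f \<le> L_sup_mu \<rho> D f \<and> L_sup_mu \<rho> D f \<le> L_un \<rho> D N f / ennreal (p_cc \<rho> N)"
proof -
  have P: "\<And>c. prob_space (D c)" using assms(2) by blast
  have S: "\<And>c. sets (D c) = sets S" using assms(3) by blast
  have fm: "f \<in> borel_measurable S" by (rule assms(4))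
  have I: "\<And>c. integrable (D c) f" using assms(5) by blast
  have part1: "L_sup \<rho> D f \<le> L_sup_mu \<rho> D f"
    unfolding L_sup_def L_sup_mu_def by (rule INF_lower) simp
  define Q where "Q = (\<Sum>cs\<in>PiE {..<N} (\<lambda>_. UNIV). ennreal (\<Prod>i<N. pmf \<rho> (cs i)) * indicator {cs. \<forall>c. \<exists>i<N. cs i = c} cs)"
  have pQ: "ennreal (p_cc \<rho> N) = Q" unfolding Q_def by (rule pcc_eq)
  have Qpos: "Q > 0"
  proof -
    obtain g :: "'c \<Rightarrow> nat" where g: "g ` UNIV \<subseteq> {..<N}" "inj_on g UNIV"
      using card_le_inj[of "UNIV :: 'c set" "{..<N}"] assms(6) by auto
    define cs0 where "cs0 = restrict (inv g) {..<N}"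
    have cs0P: "cs0 \<in> PiE {..<N} (\<lambda>_. UNIV)" by (simp add: cs0_def)
    have cov: "\<forall>c. \<exists>i<N. cs0 i = c"
    proof
      fix c
      have "g c < N" using g(1) by auto
      moreover have "cs0 (g c) = c" using \<open>g c < N\<close> g(2) by (simp add: cs0_def inv_f_f)
      ultimately show "\<exists>i<N. cs0 i = c" by blast
    qed
    have "(0::ennreal) < ennreal (\<Prod>i<N. pmf \<rho> (cs0 i)) * indicator {cs. \<forall>c. \<exists>i<N. cs i = c} cs0"
      using cov assms(1) by (simp add: prod_pos)
    also have "\<dots> \<le> Q" unfolding Q_def by (rule member_le_sum[OF cs0P]) (auto intro!: finite_PiE)
    finally show ?thesis .
  qed
  define Ic where "Ic c = (\<integral>\<^sup>+x. ennreal (- ln (exp (W_mu D f c \<bullet> f x) / (\<Sum>c'\<in>UNIV. exp (W_mu D f c' \<bullet> f x)))) \<partial>D c)" for c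
  define T where "T c cs = (\<integral>\<^sup>+p. (\<integral>\<^sup>+xs. ennreal (lossf f N p xs) \<partial>PiM {..<N} (\<lambda>i. D (cs i))) \<partial>(D c \<Otimes>\<^sub>M D c))" for c cs
  have Lmu: "L_sup_mu \<rho> D f = (\<Sum>c\<in>UNIV. ennreal (pmf \<rho> c) * Ic c)"
    unfolding L_sup_mu_def sup_loss_W_def Ic_def ..
  have TI: "indicator {cs. \<forall>c. \<exists>i<N. cs i = c} cs * Ic c \<le> T c cs" for c cs
  proof (cases "\<forall>c'. \<exists>i<N. cs i = c'")
    case True
    then show ?thesis unfolding Ic_def T_def using Tlow[OF P S fm I True] by simp
  next
    case False
    then show ?thesis by simp
  qed
  have nus: "sets (D_neg \<rho> D) = sets S" unfolding D_neg_def using S by (rule mix_sets)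
  have nup: "prob_space (D_neg \<rho> D)" unfolding D_neg_def using P S by (rule mix_prob)
  have PNsets: "sets (PiM {..<N} (\<lambda>_. D_neg \<rho> D)) = sets (PiM {..<N} (\<lambda>_. S))"
    by (rule sets_PiM_cong) (auto simp: nus)
  have G'm: "(\<lambda>p. \<integral>\<^sup>+xs. ennreal (lossf f N p xs) \<partial>PiM {..<N} (\<lambda>_. D_neg \<rho> D)) \<in> borel_measurable (S \<Otimes>\<^sub>M S)"
    by (rule G_meas[OF fm refl PNsets]) (rule prob_space_PiM, simp add: nup)
  have Lun: "L_un \<rho> D N f = (\<Sum>c\<in>UNIV. ennreal (pmf \<rho> c) *
      (\<Sum>cs\<in>PiE {..<N} (\<lambda>_. UNIV). ennreal (\<Prod>i<N. pmf \<rho> (cs i)) * T c cs))"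
  proof -
    have "L_un \<rho> D N f = (\<integral>\<^sup>+p. (\<integral>\<^sup>+xs. ennreal (lossf f N p xs) \<partial>PiM {..<N} (\<lambda>_. D_neg \<rho> D)) \<partial>D_sim \<rho> D)"
      unfolding L_un_def lossf_def ..
    also have "\<dots> = (\<Sum>c\<in>UNIV. ennreal (pmf \<rho> c) *
        (\<integral>\<^sup>+p. (\<integral>\<^sup>+xs. ennreal (lossf f N p xs) \<partial>PiM {..<N} (\<lambda>_. D_neg \<rho> D)) \<partial>(D c \<Otimes>\<^sub>M D c)))"
      unfolding D_sim_def
    proof (rule mix_nn[OF _ _ G'm])
      show "prob_space (D c \<Otimes>\<^sub>M D c)" for c by (rule prob_space_pair[OF P P])
      show "sets (D c \<Otimes>\<^sub>M D c) = sets (S \<Otimes>\<^sub>M S)" for c by (rule sets_pair_measure_cong[OF S S])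
    qed
    also have "\<dots> = (\<Sum>c\<in>UNIV. ennreal (pmf \<rho> c) *
      (\<Sum>cs\<in>PiE {..<N} (\<lambda>_. UNIV). ennreal (\<Prod>i<N. pmf \<rho> (cs i)) * T c cs))"
    proof (rule sum.cong[OF refl], rule arg_cong2[where f="(*)", OF refl])
      fix c
      have spc: "space (D c \<Otimes>\<^sub>M D c) = space (S \<Otimes>\<^sub>M S)"
        by (rule sets_eq_imp_space_eq) (rule sets_pair_measure_cong[OF S S])
      have Gm: "(\<lambda>p. \<integral>\<^sup>+xs. ennreal (lossf f N p xs) \<partial>PiM {..<N} (\<lambda>i. D (cs i))) \<in> borel_measurable (D c \<Otimes>\<^sub>M D c)" for cs
        by (rule G_meas[OF fm]) (auto intro!: sets_pair_measure_cong sets_PiM_cong prob_space_PiM simp: S P)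
      have "(\<integral>\<^sup>+p. (\<integral>\<^sup>+xs. ennreal (lossf f N p xs) \<partial>PiM {..<N} (\<lambda>_. D_neg \<rho> D)) \<partial>(D c \<Otimes>\<^sub>M D c))
          = (\<integral>\<^sup>+p. (\<Sum>cs\<in>PiE {..<N} (\<lambda>_. UNIV). ennreal (\<Prod>i<N. pmf \<rho> (cs i)) *
               (\<integral>\<^sup>+xs. ennreal (lossf f N p xs) \<partial>PiM {..<N} (\<lambda>i. D (cs i)))) \<partial>(D c \<Otimes>\<^sub>M D c))"
      proof (rule nn_integral_cong)
        fix p assume "p \<in> space (D c \<Otimes>\<^sub>M D c)"
        then have p: "p \<in> space (S \<Otimes>\<^sub>M S)" using spc by simp
        have hm: "(\<lambda>xs. ennreal (lossf f N p xs)) \<in> borel_measurable (PiM {..<N} (\<lambda>_. S))"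
          using measurable_Pair2[OF lossf_meas[OF fm refl refl] p] by simp
        show "(\<integral>\<^sup>+xs. ennreal (lossf f N p xs) \<partial>PiM {..<N} (\<lambda>_. D_neg \<rho> D))
           = (\<Sum>cs\<in>PiE {..<N} (\<lambda>_. UNIV). ennreal (\<Prod>i<N. pmf \<rho> (cs i)) *
               (\<integral>\<^sup>+xs. ennreal (lossf f N p xs) \<partial>PiM {..<N} (\<lambda>i. D (cs i))))"
          unfolding D_neg_def by (rule mix_PiM[OF P S hm])
      qed
      also have "\<dots> = (\<Sum>cs\<in>PiE {..<N} (\<lambda>_. UNIV). ennreal (\<Prod>i<N. pmf \<rho> (cs i)) * T c cs)"
        unfolding T_def using Gm by (subst nn_integral_sum) (auto simp: nn_integral_cmult)
      finally show "(\<integral>\<^sup>+p. (\<integral>\<^sup>+xs. ennreal (lossf f N p xs) \<partial>PiM {..<N} (\<lambda>_. D_neg \<rho> D)) \<partial>(D c \<Otimes>\<^sub>M D c))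
          = (\<Sum>cs\<in>PiE {..<N} (\<lambda>_. UNIV). ennreal (\<Prod>i<N. pmf \<rho> (cs i)) * T c cs)" .
    qed
    finally show ?thesis .
  qed
  have key: "Q * L_sup_mu \<rho> D f \<le> L_un \<rho> D N f"
  proof -
    have "Q * L_sup_mu \<rho> D f = (\<Sum>c\<in>UNIV. ennreal (pmf \<rho> c) *
        (\<Sum>cs\<in>PiE {..<N} (\<lambda>_. UNIV). ennreal (\<Prod>i<N. pmf \<rho> (cs i)) *
           (indicator {cs. \<forall>c. \<exists>i<N. cs i = c} cs * Ic c)))"
      unfolding Lmu Q_def sum_distrib_left sum_distrib_right
      by (intro sum.cong refl) (simp add: mult_ac)
    also have "\<dots> \<le> (\<Sum>c\<in>UNIV. ennreal (pmf \<rho> c) *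
      (\<Sum>cs\<in>PiE {..<N} (\<lambda>_. UNIV). ennreal (\<Prod>i<N. pmf \<rho> (cs i)) * T c cs))"
      by (intro sum_mono mult_left_mono TI) auto
    finally show ?thesis unfolding Lun .
  qed
  have part2: "L_sup_mu \<rho> D f \<le> L_un \<rho> D N f / ennreal (p_cc \<rho> N)"
  proof -
    have Q0: "Q \<noteq> 0" using Qpos by simp
    have Qt: "Q \<noteq> top" unfolding pQ[symmetric] by simp
    have "L_sup_mu \<rho> D f = (Q * L_sup_mu \<rho> D f) / Q"
      using ennreal_mult_divide_eq[OF Q0 Qt, of "L_sup_mu \<rho> D f"] by (simp add: mult.commute)
    also have "\<dots> \<le> L_un \<rho> D N f / Q" by (rule divide_right_mono_ennreal[OF key])
    finally show ?thesis unfolding pQ .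
  qed
  show ?thesis using part1 part2 by blast
qed

end
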